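(* Let $F:\mathbb{R}\to\mathbb{R}$ be smooth and $v:[0,1]\to\mathbb{R}$ smooth. For each $x\in[0,1]$ let $y(t,x)$ be the solution of $$\frac{d^2y(t,x)}{dt^2}=F(y(t,x)),\quad y(0,x)=x,\quad \frac{dy(0,x)}{dt}=v(x),$$ assumed to exist and be unique for all $t\in[0,\infty)$. Put $U(y)=-\int_0^yF(z)\,dz$ and $H_0(x)=\frac{v(x)^2}{2}+U(x)$. For $x\in[0,1]$ and $y\ge x$ let $T(x,y)$ be the first time moment at which $y(t,x)=y$. Assume: (i) $v(x)>0$ for all $x\in[0,1]$; (ii) $H_0(x)-U(y)>0$ for all $x\in[0,1]$ and all $y\ge x$. Then the following conditions are equivalent: 1) there are no collisions on $[0,\infty)$, i.e. $y(t,x)\neq y(t,x')$ for all $t\ge 0$ and all $x\neq x'$ in $[0,1]$; 2) for every $y>0$, the function $x\mapsto T(x,y)$ is strictly decreasing on $[0,\min\{y,1\}]$; 3) for every $y>0$ and every $x\in[0,\min\{y,1\}]$, $$\frac{1}{v(x)}+\frac{v(x)v'(x)-F(x)}{2\sqrt2}\int_x^y\frac{dz}{(H_0(x)-U(z))^{3/2}}\ge 0,$$ where equality can hold only on a discrete set of points.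
   Context: This concerns a one-dimensional continuum of non-interacting point particles: each point $x\in[0,1]$ is a particle with initial position $x$ and initial velocity $v(x)$, moving independently under the external force $F$ (unit mass). *)

theory Defs
  imports "HOL-Analysis.Analysis"
begin

definition smooth_on :: "real set \<Rightarrow> (real \<Rightarrow> real) \<Rightarrow> bool" where
  "smooth_on S f \<longleftrightarrow> (\<exists>D :: nat \<Rightarrow> real \<Rightarrow> real. (\<forall>x\<in>S. D 0 x = f x) \<and>
      (\<forall>n. \<forall>x\<in>S. (D n has_real_derivative D (Suc n) x) (at x within S)))"

definition oint :: "(real \<Rightarrow> real) \<Rightarrow> real \<Rightarrow> real \<Rightarrow> real" where
  "oint f a b = (if a \<le> b then integral {a..b} f else - integral {b..a} f)"

definition potU :: "(real \<Rightarrow> real) \<Rightarrow> real \<Rightarrow> real" where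
  "potU F y = - oint F 0 y"

definition energy0 :: "(real \<Rightarrow> real) \<Rightarrow> (real \<Rightarrow> real) \<Rightarrow> real \<Rightarrow> real" where
  "energy0 F v x = (v x)^2 / 2 + potU F x"

text \<open>First time moment t \<ge> 0 at which the particle started at x is at position p,
  where traj t x is the position at time t of the particle with initial position x.\<close>
definition first_time :: "(real \<Rightarrow> real \<Rightarrow> real) \<Rightarrow> real \<Rightarrow> real \<Rightarrow> real" where
  "first_time traj x p = Inf {t. 0 \<le> t \<and> traj t x = p}"

end

theory Submission imports Defs begin

locale traj =
  fixes F v v' :: "real \<Rightarrow> real" and y y' :: "real \<Rightarrow> real \<Rightarrow> real"
  assumes F_smooth: "smooth_on UNIV F"
    and v'_deriv: "\<And>x. x \<in> {0..1} \<Longrightarrow> (v has_real_derivative v' x) (at x within {0..1})"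
    and y_init: "\<And>x. x \<in> {0..1} \<Longrightarrow> y 0 x = x"
    and y'_init: "\<And>x. x \<in> {0..1} \<Longrightarrow> y' 0 x = v x"
    and y_deriv: "\<And>x t. x \<in> {0..1} \<Longrightarrow> 0 \<le> t \<Longrightarrow>
        ((\<lambda>s. y s x) has_real_derivative y' t x) (at t within {0..})"
    and y'_deriv: "\<And>x t. x \<in> {0..1} \<Longrightarrow> 0 \<le> t \<Longrightarrow>
        ((\<lambda>s. y' s x) has_real_derivative F (y t x)) (at t within {0..})"
    and v_pos: "\<And>x. x \<in> {0..1} \<Longrightarrow> v x > 0"
    and energy_pos: "\<And>x p. x \<in> {0..1} \<Longrightarrow> x \<le> p \<Longrightarrow> energy0 F v x - potU F p > 0"
begin

abbreviation "U \<equiv> potU F"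
abbreviation "H \<equiv> energy0 F v"

lemma F_cont: "continuous_on UNIV F"
proof -
  obtain D where D: "\<forall>x. D 0 x = F x" "\<forall>n x. (D n has_real_derivative D (Suc n) x) (at x)"
    using F_smooth unfolding smooth_on_def by auto
  have "D 0 = F" using D(1) by auto
  then have "\<And>x. (F has_real_derivative D 1 x) (at x)" using D(2) by (metis One_nat_def)
  then show ?thesis by (meson DERIV_isCont continuous_at_imp_continuous_on)
qed

lemma F_int: "F integrable_on {a..b}"
  using F_cont by (simp add: integrable_continuous_real continuous_on_subset)

lemma oint_eq: assumes "c \<le> 0" "c \<le> b" shows "oint F 0 b = integral {c..b} F - integral {c..0} F"
proof (cases "0 \<le> b")
  case True
  then show ?thesis unfolding oint_def
    using Henstock_Kurzweil_Integration.integral_combine[OF assms(1) True F_int] by simp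
next
  case False
  then show ?thesis unfolding oint_def
    using Henstock_Kurzweil_Integration.integral_combine[OF assms(2) _ F_int, of 0] by simp
qed

lemma U_deriv: "(U has_real_derivative - F x) (at x)"
proof -
  define c where "c = - \<bar>x\<bar> - 1"
  have cx: "c < x" "c \<le> 0" unfolding c_def by auto
  have "((\<lambda>u. integral {c..u} F) has_real_derivative F x) (at x within {c..x+1})"
    by (rule integral_has_real_derivative) (use F_cont cx in \<open>auto intro: continuous_on_subset\<close>)
  then have "((\<lambda>u. integral {c..u} F) has_real_derivative F x) (at x)"
    using at_within_Icc_at[of c x "x+1"] cx by simp
  then have d: "((\<lambda>u. - (integral {c..u} F - integral {c..0} F)) has_real_derivative - F x) (at x)"
    by (auto intro!: derivative_eq_intros)
  show ?thesis
    apply (rule has_field_derivative_transform_within_open[OF d, of "{c<..}"])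
    using cx by (auto simp: potU_def oint_eq)
qed

lemma U_cont: "continuous_on S U"
  using U_deriv by (meson DERIV_isCont continuous_at_imp_continuous_on)

lemma U_cont_comp[continuous_intros]: "continuous_on S f \<Longrightarrow> continuous_on S (\<lambda>q. U (f q))"
  by (rule continuous_on_compose2[OF U_cont[of UNIV]]) auto

lemma H_deriv: assumes "x \<in> {0..1}"
  shows "(H has_real_derivative v x * v' x - F x) (at x within {0..1})"
proof -
  have dU: "(U has_real_derivative - F x) (at x within {0..1})"
    using U_deriv by (rule has_field_derivative_at_within)
  have "((\<lambda>x. (v x)^2/2 + U x) has_real_derivative v x * v' x - F x) (at x within {0..1})"
    by (rule DERIV_cong[OF DERIV_add[OF DERIV_cdivide[OF DERIV_power[OF v'_deriv[OF assms]]] dU]]) simp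
  then show ?thesis unfolding energy0_def[abs_def] .
qed

lemma energy: assumes x: "x \<in> {0..1}" and t: "0 \<le> t" shows "(y' t x)^2/2 + U (y t x) = H x"
proof -
  have "\<exists>c. \<forall>s\<in>{0..}. (y' s x)^2/2 + U (y s x) = c"
  proof (rule has_field_derivative_zero_constant)
    fix s :: real assume "s \<in> {0..}"
    then have s: "0 \<le> s" by simp
    show "((\<lambda>s. (y' s x)^2/2 + U (y s x)) has_real_derivative 0) (at s within {0..})"
      by (rule DERIV_cong[OF DERIV_add[OF DERIV_cdivide[OF DERIV_power[OF y'_deriv[OF x s]]]
           DERIV_chain2[OF U_deriv y_deriv[OF x s]]]]) simp
  qed simp
  then obtain c where c: "\<And>s. 0 \<le> s \<Longrightarrow> (y' s x)^2/2 + U (y s x) = c" by auto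
  have "c = H x" using c[of 0] y_init[OF x] y'_init[OF x] by (simp add: energy0_def)
  then show ?thesis using c[OF t] by simp
qed

lemma y_cont: "x \<in> {0..1} \<Longrightarrow> continuous_on {0..} (\<lambda>s. y s x)"
  by (rule DERIV_continuous_on[of _ _ "\<lambda>t. y' t x"]) (auto intro: y_deriv)

lemma y'_cont: "x \<in> {0..1} \<Longrightarrow> continuous_on {0..} (\<lambda>s. y' s x)"
  by (rule DERIV_continuous_on[of _ _ "\<lambda>t. F (y t x)"]) (auto intro: y'_deriv)

lemma inc_lemma:
  fixes f f' :: "real \<Rightarrow> real"
  assumes ab: "a < b" and d: "\<And>s. s \<in> {a..b} \<Longrightarrow> (f has_real_derivative f' s) (at s within {a..b})"
    and pos: "\<And>s. s \<in> {a<..<b} \<Longrightarrow> f' s > 0"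
  shows "f a < f b"
proof -
  have "\<And>s. a \<le> s \<Longrightarrow> s \<le> b \<Longrightarrow> (f has_derivative (\<lambda>h. f' s * h)) (at s within {a..b})"
    using d unfolding has_field_derivative_def by auto
  then obtain \<xi> where xi: "\<xi> \<in> {a<..<b}" "f b - f a = f' \<xi> * (b - a)"
    using mvt_simple[of a b f "\<lambda>s h. f' s * h"] ab by blast
  have "f' \<xi> * (b - a) > 0" using pos[OF xi(1)] ab by (intro mult_pos_pos) auto
  then show ?thesis using xi(2) by linarith
qed

lemma y'_pos: assumes x: "x \<in> {0..1}" and t: "0 \<le> t" shows "y' t x > 0"
proof (rule ccontr)
  assume neg: "\<not> y' t x > 0"
  have c': "continuous_on {0..b} (\<lambda>s. y' s x)" for b using y'_cont[OF x] by (rule continuous_on_subset) auto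
  have v0: "y' 0 x > 0" using y'_init[OF x] v_pos[OF x] by simp
  define Z where "Z = {s \<in> {0..t}. y' s x = 0}"
  obtain t1 where t1: "0 \<le> t1" "t1 \<le> t" "y' t1 x = 0"
    using IVT2'[of "\<lambda>s. y' s x" t 0 0, OF _ _ t c'] neg v0 by force
  have Zne: "Z \<noteq> {}" using t1 unfolding Z_def by auto
  have Zcl: "closed Z" unfolding Z_def by (rule continuous_closed_preimage_constant[OF c']) simp
  have Zbdd: "bdd_below Z" unfolding Z_def by (auto intro: bdd_belowI[of _ 0])
  define t0 where "t0 = Inf Z"
  have t0Z: "t0 \<in> Z" using closed_contains_Inf[OF Zne Zbdd Zcl] t0_def by simp
  then have t0: "0 \<le> t0" "t0 \<le> t" "y' t0 x = 0" unfolding Z_def by auto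
  have t0pos: "0 < t0" using t0 v0 by (cases "t0 = 0") auto
  have pos: "y' s x > 0" if s: "0 \<le> s" "s < t0" for s
  proof (rule ccontr)
    assume "\<not> y' s x > 0"
    then obtain s1 where s1: "0 \<le> s1" "s1 \<le> s" "y' s1 x = 0"
      using IVT2'[of "\<lambda>s. y' s x" s 0 0, OF _ _ s(1) c'] v0 by force
    then have "s1 \<in> Z" using s t0 unfolding Z_def by auto
    then have "t0 \<le> s1" unfolding t0_def by (rule cInf_lower[OF _ Zbdd])
    then show False using s1 s by simp
  qed
  have "y 0 x < y t0 x"
  proof (rule inc_lemma[OF t0pos, of _ "\<lambda>s. y' s x"])
    fix s assume "s \<in> {0..t0}"
    then show "((\<lambda>s. y s x) has_real_derivative y' s x) (at s within {0..t0})"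
      using y_deriv[OF x, of s] by (auto intro: has_field_derivative_subset)
  next
    fix s assume "s \<in> {0<..<t0}"
    then show "y' s x > 0" using pos by auto
  qed
  then have "x \<le> y t0 x" using y_init[OF x] by simp
  then have "H x - U (y t0 x) > 0" using energy_pos[OF x] by simp
  moreover have "(y' t0 x)^2/2 + U (y t0 x) = H x" using energy[OF x t0(1)] .
  ultimately show False using t0(3) by simp
qed

lemma y_strict: assumes x: "x \<in> {0..1}" and st: "0 \<le> s" "s < t" shows "y s x < y t x"
proof (rule inc_lemma[OF st(2), of _ "\<lambda>s. y' s x"])
  fix u assume "u \<in> {s..t}"
  then show "((\<lambda>s. y s x) has_real_derivative y' u x) (at u within {s..t})"
    using y_deriv[OF x, of u] st by (auto intro: has_field_derivative_subset)
next
  fix u assume "u \<in> {s<..<t}"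
  then show "y' u x > 0" using y'_pos[OF x] st by auto
qed

lemma y_mono: "x \<in> {0..1} \<Longrightarrow> 0 \<le> s \<Longrightarrow> s \<le> t \<Longrightarrow> y s x \<le> y t x"
  using y_strict[of x s t] by (cases "s = t") auto

lemma y_ge: "x \<in> {0..1} \<Longrightarrow> 0 \<le> t \<Longrightarrow> x \<le> y t x"
  using y_mono[of x 0 t] y_init[of x] by simp

definition phi :: "real \<Rightarrow> real" where "phi w = 1 / sqrt (2*w)"

definition tau :: "real \<Rightarrow> real \<Rightarrow> real" where "tau x p = integral {x..p} (\<lambda>z. phi (H x - U z))"

lemma phi_cont: "continuous_on S f \<Longrightarrow> (\<And>q. q \<in> S \<Longrightarrow> f q > 0) \<Longrightarrow> continuous_on S (\<lambda>q. phi (f q))"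
  unfolding phi_def by (intro continuous_intros; force)

lemma phi_nonneg: "0 \<le> w \<Longrightarrow> 0 \<le> phi w"
  unfolding phi_def by simp

lemma Hpos: "x \<in> {0..1} \<Longrightarrow> x \<le> z \<Longrightarrow> 0 < H x - U z"
  using energy_pos by blast

lemma Hnn: "x \<in> {0..1} \<Longrightarrow> x \<le> z \<Longrightarrow> 0 \<le> H x - U z"
  using energy_pos less_imp_le by blast

lemma g_cont: assumes "x \<in> {0..1}" shows "continuous_on {x..b} (\<lambda>z. phi (H x - U z))"
  by (rule phi_cont) (use Hpos[OF assms] in \<open>auto intro!: continuous_intros\<close>)

lemma g_int: "x \<in> {0..1} \<Longrightarrow> (\<lambda>z. phi (H x - U z)) integrable_on {x..b}"
  using g_cont by (rule integrable_continuous_real)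

lemma tau_nonneg: "x \<in> {0..1} \<Longrightarrow> 0 \<le> tau x p"
  unfolding tau_def
  by (rule integral_nonneg[OF g_int]) (auto intro!: phi_nonneg Hnn)

lemma tau_y: assumes x: "x \<in> {0..1}" and T: "0 \<le> T" shows "tau x (y T x) = T"
proof -
  define B where "B = y T x"
  have "\<exists>c. \<forall>s\<in>{0..T}. tau x (y s x) - s = c"
  proof (rule has_field_derivative_zero_constant)
    fix s assume s: "s \<in> {0..T}"
    have img: "(\<lambda>s. y s x) ` {0..T} \<subseteq> {x..B}"
    proof (intro image_subsetI)
      fix u assume "u \<in> {0..T}"
      then show "y u x \<in> {x..B}" using y_ge[OF x, of u] y_mono[OF x, of u T] by (auto simp: B_def)
    qed
    have ys: "y s x \<in> {x..B}" using img s by blast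
    have d1: "((\<lambda>q. tau x q) has_real_derivative phi (H x - U (y s x))) (at (y s x) within {x..B})"
      unfolding tau_def by (rule integral_has_real_derivative[OF g_cont[OF x] ys])
    have d2: "((\<lambda>s. y s x) has_real_derivative y' s x) (at s within {0..T})"
      using y_deriv[OF x, of s] s by (auto intro: has_field_derivative_subset)
    have d3: "((\<lambda>q. tau x q) \<circ> (\<lambda>s. y s x) has_real_derivative phi (H x - U (y s x)) * y' s x) (at s within {0..T})"
      by (rule DERIV_image_chain[OF has_field_derivative_subset[OF d1 img] d2])
    have yp: "y' s x > 0" using y'_pos[OF x] s by auto
    have "2 * (H x - U (y s x)) = (y' s x)^2" using energy[OF x, of s] s by auto
    then have "phi (H x - U (y s x)) * y' s x = 1" unfolding phi_def using yp by simp
    then show "((\<lambda>s. tau x (y s x) - s) has_real_derivative 0) (at s within {0..T})"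
      using DERIV_diff[OF d3 DERIV_ident] by (simp add: o_def)
  qed simp
  then obtain c where c: "\<And>s. s \<in> {0..T} \<Longrightarrow> tau x (y s x) - s = c" by blast
  have "c = 0" using c[of 0] T y_init[OF x] by (simp add: tau_def)
  then show ?thesis using c[of T] T by simp
qed

lemma reach: assumes x: "x \<in> {0..1}" and p: "x \<le> p" shows "\<exists>t\<ge>0. y t x = p"
proof (rule ccontr)
  assume no: "\<not> ?thesis"
  define t where "t = tau x p + 1"
  have t0: "0 \<le> t" using tau_nonneg[OF x, of p] t_def by simp
  have "y t x < p"
  proof (rule ccontr)
    assume "\<not> y t x < p"
    moreover have "continuous_on {0..t} (\<lambda>s. y s x)" using y_cont[OF x] by (rule continuous_on_subset) auto
    ultimately obtain s where "0 \<le> s" "s \<le> t" "y s x = p"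
      using IVT'[of "\<lambda>s. y s x" 0 p t] y_init[OF x] p t0 by force
    then show False using no by auto
  qed
  have "tau x (y t x) \<le> tau x p"
    unfolding tau_def
    by (rule integral_subset_le[OF _ g_int[OF x] g_int[OF x]])
       (use y_ge[OF x t0] \<open>y t x < p\<close> in \<open>auto intro!: phi_nonneg Hnn[OF x]\<close>)
  then show False using tau_y[OF x t0] t_def by simp
qed

lemma first_time_eq: assumes x: "x \<in> {0..1}" and p: "x \<le> p" shows "first_time y x p = tau x p"
proof -
  have "{t. 0 \<le> t \<and> y t x = p} = {tau x p}"
  proof
    show "{t. 0 \<le> t \<and> y t x = p} \<subseteq> {tau x p}"
    proof
      fix t assume "t \<in> {t. 0 \<le> t \<and> y t x = p}"
      then have "0 \<le> t" "y t x = p" by auto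
      then show "t \<in> {tau x p}" using tau_y[OF x, of t] by simp
    qed
    obtain t where "0 \<le> t" "y t x = p" using reach[OF x p] by blast
    then show "{tau x p} \<subseteq> {t. 0 \<le> t \<and> y t x = p}" using tau_y[OF x, of t] by simp
  qed
  then show ?thesis unfolding first_time_def by simp
qed

lemma hit: "x \<in> {0..1} \<Longrightarrow> x \<le> p \<Longrightarrow> y (tau x p) x = p"
  using reach tau_y by metis


lemma partA:
  "(\<forall>t\<ge>0. \<forall>x\<in>{0..1}. \<forall>x'\<in>{0..1}. x \<noteq> x' \<longrightarrow> y t x \<noteq> y t x')
   \<longleftrightarrow> (\<forall>p>0. \<forall>x\<in>{0..min p 1}. \<forall>x'\<in>{0..min p 1}. x < x' \<longrightarrow>
          first_time y x' p < first_time y x p)"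
proof
  assume nc: "\<forall>t\<ge>0. \<forall>x\<in>{0..1}. \<forall>x'\<in>{0..1}. x \<noteq> x' \<longrightarrow> y t x \<noteq> y t x'"
  show "\<forall>p>0. \<forall>x\<in>{0..min p 1}. \<forall>x'\<in>{0..min p 1}. x < x' \<longrightarrow>
          first_time y x' p < first_time y x p"
  proof (intro allI impI ballI)
    fix p x x' :: real
    assume p: "p > 0" and xS: "x \<in> {0..min p 1}" and x'S: "x' \<in> {0..min p 1}" and xx: "x < x'"
    have x: "x \<in> {0..1}" "x \<le> p" and x': "x' \<in> {0..1}" "x' \<le> p" using xS x'S by auto
    show "first_time y x' p < first_time y x p"
    proof (rule ccontr)
      assume "\<not> first_time y x' p < first_time y x p"
      then have le: "tau x p \<le> tau x' p" using first_time_eq[OF x] first_time_eq[OF x'] by simp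
      define t where "t = tau x p"
      have t0: "0 \<le> t" using tau_nonneg[OF x(1)] t_def by simp
      have yx: "y t x = p" using hit[OF x] t_def by simp
      have "y t x' \<le> y (tau x' p) x'" using y_mono[OF x'(1) t0] le t_def by simp
      then have "y t x' \<le> p" using hit[OF x'] by simp
      moreover have "y t x' \<noteq> p" using nc t0 x x' xx yx by force
      ultimately have lt: "y t x' - y t x < 0" using yx by simp
      have "continuous_on {0..t} (\<lambda>s. y s x' - y s x)"
        using continuous_on_subset[OF y_cont[OF x(1)], of "{0..t}"] continuous_on_subset[OF y_cont[OF x'(1)], of "{0..t}"]
        by (intro continuous_intros) auto
      moreover have "y 0 x' - y 0 x > 0" using y_init[OF x(1)] y_init[OF x'(1)] xx by simp
      ultimately obtain s where s: "0 \<le> s" "s \<le> t" "y s x' - y s x = 0"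
        using IVT2'[of "\<lambda>s. y s x' - y s x" t 0 0 ] t0 lt by force
      then show False using nc x x' xx by force
    qed
  qed
next
  assume st: "\<forall>p>0. \<forall>x\<in>{0..min p 1}. \<forall>x'\<in>{0..min p 1}. x < x' \<longrightarrow>
          first_time y x' p < first_time y x p"
  show "\<forall>t\<ge>0. \<forall>x\<in>{0..1}. \<forall>x'\<in>{0..1}. x \<noteq> x' \<longrightarrow> y t x \<noteq> y t x'"
  proof (intro allI impI ballI)
    fix t x x' :: real
    assume t: "0 \<le> t" and x: "x \<in> {0..1}" and x': "x' \<in> {0..1}" and ne: "x \<noteq> x'"
    have key: False if a: "a \<in> {0..1}" and b: "b \<in> {0..1}" and ab: "a < b" and eq: "y t a = y t b" for a b
    proof -
      define p where "p = y t b"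
      have bp: "b \<le> p" using y_ge[OF b t] p_def by simp
      have ap: "a \<le> p" using bp ab by simp
      have pp: "p > 0" using bp ab a by simp
      have "first_time y a p = t" using first_time_eq[OF a ap] tau_y[OF a t] eq p_def by simp
      moreover have "first_time y b p = t" using first_time_eq[OF b bp] tau_y[OF b t] p_def by simp
      moreover have "first_time y b p < first_time y a p"
        using st pp a b ab ap bp by auto
      ultimately show False by simp
    qed
    show "y t x \<noteq> y t x'"
    proof
      assume "y t x = y t x'"
      then show False using key[OF x x'] key[OF x' x] ne by (cases "x < x'") auto
    qed
  qed
qed

lemma powr32: "0 < w \<Longrightarrow> w powr (3/2) = w * sqrt (w::real)"
proof -
  assume w: "0 < w"
  have "w powr (3/2) = w powr (1 + 1/2)" by simp
  also have "... = w powr 1 * w powr (1/2)" by (rule powr_add)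
  also have "... = w * w powr (1/2)" using w by simp
  also have "... = w * sqrt w" using w by (simp add: powr_half_sqrt)
  finally show ?thesis .
qed
lemma phi_deriv_raw: assumes w: "0 < (w::real)" shows "((\<lambda>w. 1 / sqrt (2*w)) has_real_derivative - (1/(2 * sqrt 2)) * (1 / w powr (3/2))) (at w)"
proof -
  have s: "sqrt (2*w) > 0" using w by simp
  have d1: "((\<lambda>w. sqrt (2*w)) has_real_derivative inverse (sqrt (2*w)) / 2 * 2) (at w)"
  proof -
    have ds: "(sqrt has_real_derivative inverse (sqrt (2*w)) / 2) (at (2*w))"
      using w by (intro DERIV_real_sqrt) simp
    have dl: "((\<lambda>w. 2*w) has_real_derivative 2) (at w)"
      by (auto intro!: derivative_eq_intros)
    show ?thesis using DERIV_chain2[OF ds dl] .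
  qed
  have d3: "((\<lambda>w. inverse (sqrt (2*w))) has_real_derivative - (inverse (sqrt (2*w)) / 2 * 2 * inverse (sqrt (2*w) ^ Suc (Suc 0)))) (at w)"
    by (rule DERIV_inverse_fun[OF d1]) (use s in simp)
  have sw: "sqrt w > 0" using w by simp
  have e: "- (inverse (sqrt (2*w)) / 2 * 2 * inverse (sqrt (2*w) ^ Suc (Suc 0))) = - (1/(2 * sqrt 2)) * (1 / w powr (3/2))"
    unfolding powr32[OF w] real_sqrt_mult using w sw by (simp add: field_simps power2_eq_square)
  show ?thesis using DERIV_cong[OF d3 e] by (simp add: inverse_eq_divide)
qed

definition psi :: "real \<Rightarrow> real" where "psi w = - (1/(2 * sqrt 2)) * (1 / w powr (3/2))"

lemma phi_deriv: "0 < w \<Longrightarrow> (phi has_real_derivative psi w) (at w)"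
  unfolding phi_def[abs_def] psi_def by (rule phi_deriv_raw)

lemma psi_cont: "continuous_on S f \<Longrightarrow> (\<And>q. q \<in> S \<Longrightarrow> f q > 0) \<Longrightarrow> continuous_on S (\<lambda>q. psi (f q))"
  unfolding psi_def by (intro continuous_intros; force)

definition E :: "real \<Rightarrow> real \<Rightarrow> real" where
  "E x p = 1 / v x + (v x * v' x - F x) / (2 * sqrt 2) *
             integral {x..p} (\<lambda>z. 1 / (energy0 F v x - potU F z) powr (3/2))"

lemma tau_deriv:
  assumes p: "p > 0" and x0: "x0 \<in> {0..min p 1}"
  shows "((\<lambda>x. tau x p) has_real_derivative - E x0 p) (at x0 within {0..min p 1})"
proof -
  define S where "S = {0..min p 1}"
  have x01: "x0 \<in> {0..1}" "x0 \<le> p" using x0 by auto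
  define h0 where "h0 = H x0"
  have h0pos: "h0 - U x0 > 0" using Hpos[OF x01(1)] h0_def by simp
  have "isCont U x0" using U_deriv DERIV_isCont by blast
  then obtain \<delta> where \<delta>: "\<delta> > 0" "\<And>z. dist z x0 < \<delta> \<Longrightarrow> dist (U z) (U x0) < h0 - U x0"
    unfolding continuous_at_eps_delta using h0pos by blast
  define c where "c = x0 - \<delta>/2"
  define K where "K = {c..p}"
  have cx0: "c < x0" using \<delta> c_def by simp
  have Kpos: "h0 - U z > 0" if z: "z \<in> K" for z
  proof (cases "x0 \<le> z")
    case True
    then show ?thesis using Hpos[OF x01(1)] h0_def by simp
  next
    case False
    then have "dist z x0 < \<delta>" using z \<delta> unfolding K_def c_def dist_real_def by auto
    then have "dist (U z) (U x0) < h0 - U x0" by (rule \<delta>(2))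
    then show ?thesis unfolding dist_real_def by linarith
  qed
  have Kne: "K \<noteq> {}" using cx0 x01 K_def by auto
  have "continuous_on K (\<lambda>z. h0 - U z)" by (intro continuous_intros)
  then obtain zm where zm: "zm \<in> K" "\<And>z. z \<in> K \<Longrightarrow> h0 - U zm \<le> h0 - U z"
    using continuous_attains_inf[of K "\<lambda>z. h0 - U z"] Kne unfolding K_def by auto
  define m where "m = (h0 - U zm)/2"
  have m: "m > 0" using Kpos[OF zm(1)] m_def by simp
  have mK: "h0 - U z \<ge> 2*m" if "z \<in> K" for z using zm(2)[OF that] m_def by simp
  define X where "X = {h0 - m<..}"
  have XK: "h - U z > m" if "h \<in> X" "z \<in> K" for h z using mK[OF that(2)] that(1) X_def by simp
  define \<Psi> where "\<Psi> h a = integral {a..p} (\<lambda>z. phi (h - U z))" for h a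
  define I where "I = integral {x0..p} (\<lambda>z. psi (h0 - U z))"
  have x0K: "x0 \<in> K" using cx0 x01 K_def by auto
  have x0p_K: "{x0..p} \<subseteq> K" using cx0 K_def by auto
  have h0X: "h0 \<in> X" using m X_def by simp
  have fx: "((\<lambda>h. \<Psi> h x0) has_real_derivative I) (at h0 within X)"
  proof -
    have "((\<lambda>h. integral (cbox x0 p) (\<lambda>z. phi (h - U z))) has_real_derivative integral (cbox x0 p) (\<lambda>z. psi (h0 - U z))) (at h0 within X)"
    proof (rule leibniz_rule_field_derivative[where fx = "\<lambda>h z. psi (h - U z)"])
      fix h z assume h: "h \<in> X" and z: "z \<in> cbox x0 p"
      have "z \<in> K" using z x0p_K unfolding cbox_interval by auto
      then have pos: "h - U z > 0" using XK[OF h] m by force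
      have dl: "((\<lambda>h. h - U z) has_real_derivative 1) (at h within X)"
        by (auto intro!: derivative_eq_intros)
      show "((\<lambda>h. phi (h - U z)) has_real_derivative psi (h - U z)) (at h within X)"
        using DERIV_chain2[OF phi_deriv[OF pos] dl] by simp
    next
      fix h assume h: "h \<in> X"
      have pos': "\<And>z. z \<in> {x0..p} \<Longrightarrow> h - U z > 0" using XK[OF h] m x0p_K by force
      have "continuous_on {x0..p} (\<lambda>z. phi (h - U z))"
        by (rule phi_cont) (use pos' in \<open>auto intro!: continuous_intros\<close>)
      then show "(\<lambda>z. phi (h - U z)) integrable_on cbox x0 p"
        unfolding cbox_interval by (rule integrable_continuous_real)
    next
      have pos': "\<And>q. q \<in> X \<times> {x0..p} \<Longrightarrow> fst q - U (snd q) > 0" using XK m x0p_K by force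
      have "continuous_on (X \<times> {x0..p}) (\<lambda>q. psi (fst q - U (snd q)))"
        by (rule psi_cont) (use pos' in \<open>auto intro!: continuous_intros\<close>)
      then show "continuous_on (X \<times> cbox x0 p) (\<lambda>(h, z). psi (h - U z))"
        unfolding cbox_interval split_beta' .
    next
      show "h0 \<in> X" by (rule h0X)
      show "convex X" unfolding X_def by (rule convex_real_interval)
    qed
    then show ?thesis unfolding \<Psi>_def I_def cbox_interval .
  qed
  have fy: "((\<lambda>a. \<Psi> h a) has_derivative blinfun_apply (blinfun_mult_right (- phi (h - U a)))) (at a within K)"
    if h: "h \<in> X" and a: "a \<in> K" for h a
  proof -
    have pos': "\<And>z. z \<in> {c..p} \<Longrightarrow> h - U z > 0" using XK[OF h] m K_def by force
    have cont: "continuous_on {c..p} (\<lambda>z. phi (h - U z))"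
      by (rule phi_cont) (use pos' in \<open>auto intro!: continuous_intros\<close>)
    have "((\<lambda>a. integral {c..a} (\<lambda>z. phi (h - U z))) has_real_derivative phi (h - U a)) (at a within {c..p})"
      by (rule integral_has_real_derivative[OF cont]) (use a K_def in auto)
    then have d: "((\<lambda>a. integral {c..p} (\<lambda>z. phi (h - U z)) - integral {c..a} (\<lambda>z. phi (h - U z))) has_real_derivative - phi (h - U a)) (at a within K)"
      unfolding K_def by (auto intro!: derivative_eq_intros)
    have "((\<lambda>a. \<Psi> h a) has_real_derivative - phi (h - U a)) (at a within K)"
    proof (rule has_field_derivative_transform_within[OF d zero_less_one a])
      fix a' assume "a' \<in> K" "dist a' a < 1"
      then show "integral {c..p} (\<lambda>z. phi (h - U z)) - integral {c..a'} (\<lambda>z. phi (h - U z)) = \<Psi> h a'"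
        using Henstock_Kurzweil_Integration.integral_combine[of c a' p "\<lambda>z. phi (h - U z)"]
          integrable_continuous_real[OF cont] unfolding \<Psi>_def K_def by auto
    qed
    then show ?thesis by (simp add: has_field_derivative_eq_has_derivative_blinfun)
  qed
  have fyc: "continuous (at (h0, x0) within X \<times> K) (\<lambda>(h, a). blinfun_mult_right (- phi (h - U a)))"
  proof -
    have pos': "\<And>q. q \<in> X \<times> K \<Longrightarrow> fst q - U (snd q) > 0" using XK m by force
    have "continuous_on (X \<times> K) (\<lambda>q. blinfun_mult_right (- phi (fst q - U (snd q))))"
      by (intro continuous_intros phi_cont) (use pos' in \<open>auto intro!: continuous_intros\<close>)
    then show ?thesis unfolding split_beta'
      using continuous_on_eq_continuous_within h0X x0K by blast
  qed
  have dPsi: "((\<lambda>(h, a). \<Psi> h a) has_derivative (\<lambda>(th, ta). I * th + blinfun_apply (blinfun_mult_right (- phi (h0 - U x0))) ta)) (at (h0, x0) within X \<times> K)"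
    by (rule has_derivative_partialsI[OF fx[unfolded has_field_derivative_def] fy fyc x0K])
       (auto simp: K_def)
  define S' where "S' = {x \<in> S. H x \<in> X \<and> x \<in> K}"
  define Hd where "Hd = v x0 * v' x0 - F x0"
  have S'01: "S' \<subseteq> {0..1}" unfolding S'_def S_def by auto
  have dk: "((\<lambda>x. (H x, x)) has_derivative (\<lambda>t. (Hd * t, t))) (at x0 within S')"
  proof (rule has_derivative_Pair)
    show "(H has_derivative (*) Hd) (at x0 within S')"
      using has_field_derivative_subset[OF H_deriv[OF x01(1)] S'01]
      unfolding Hd_def has_field_derivative_def .
  qed (rule has_derivative_ident)
  have dPsi': "((\<lambda>(h, a). \<Psi> h a) has_derivative (\<lambda>(th, ta). I * th + blinfun_apply (blinfun_mult_right (- phi (h0 - U x0))) ta))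
      (at (h0, x0) within (\<lambda>x. (H x, x)) ` S')"
    by (rule has_derivative_subset[OF dPsi]) (auto simp: S'_def)
  have comp: "((\<lambda>(h, a). \<Psi> h a) \<circ> (\<lambda>x. (H x, x)) has_derivative
      (\<lambda>(th, ta). I * th + blinfun_apply (blinfun_mult_right (- phi (h0 - U x0))) ta) \<circ> (\<lambda>t. (Hd * t, t))) (at x0 within S')"
    by (rule diff_chain_within[OF dk]) (use dPsi' h0_def in simp)
  define Dv where "Dv = I * Hd - phi (h0 - U x0)"
  have eqf: "(\<lambda>(h, a). \<Psi> h a) \<circ> (\<lambda>x. (H x, x)) = (\<lambda>x. tau x p)"
    by (auto simp: \<Psi>_def tau_def)
  have eqd: "(\<lambda>(th, ta). I * th + blinfun_apply (blinfun_mult_right (- phi (h0 - U x0))) ta) \<circ> (\<lambda>t. (Hd * t, t)) = (*) Dv"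
    by (auto simp: Dv_def algebra_simps)
  have dS': "((\<lambda>x. tau x p) has_real_derivative Dv) (at x0 within S')"
    using comp unfolding eqf eqd has_field_derivative_def .
  have "continuous (at x0 within {0..1}) H" by (rule DERIV_continuous[OF H_deriv[OF x01(1)]])
  then obtain \<epsilon> where \<epsilon>: "\<epsilon> > 0" "\<And>x'. x' \<in> {0..1} \<Longrightarrow> dist x' x0 < \<epsilon> \<Longrightarrow> dist (H x') (H x0) < m"
    unfolding continuous_within_eps_delta using m by blast
  define Ob where "Ob = ball x0 \<epsilon> \<inter> {c<..}"
  have Ob: "open Ob" "x0 \<in> Ob" unfolding Ob_def using \<epsilon> cx0 by auto
  have sub: "S \<inter> Ob \<subseteq> S'"
  proof
    fix x assume x: "x \<in> S \<inter> Ob"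
    then have "x \<in> {0..1}" "dist x x0 < \<epsilon>" unfolding S_def Ob_def by (auto simp: dist_commute)
    then have "dist (H x) h0 < m" using \<epsilon>(2) h0_def by blast
    then have "H x \<in> X" unfolding X_def dist_real_def by auto
    moreover have "x \<in> K" using x unfolding S_def Ob_def K_def by auto
    ultimately show "x \<in> S'" using x unfolding S'_def by auto
  qed
  have "at x0 within S = at x0 within (S \<inter> Ob)"
    by (rule at_within_nhd[OF Ob(2,1)]) auto
  moreover have "((\<lambda>x. tau x p) has_real_derivative Dv) (at x0 within (S \<inter> Ob))"
    by (rule has_field_derivative_subset[OF dS' sub])
  ultimately have dS: "((\<lambda>x. tau x p) has_real_derivative Dv) (at x0 within S)" by simp
  have v0: "v x0 > 0" using v_pos[OF x01(1)] .
  have "h0 - U x0 = (v x0)^2 / 2" unfolding h0_def energy0_def by simp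
  then have "2 * (h0 - U x0) = (v x0)^2" by simp
  then have ph: "phi (h0 - U x0) = 1 / v x0" unfolding phi_def using v0 by (simp only:) simp
  have "I = - (1/(2 * sqrt 2)) * integral {x0..p} (\<lambda>z. 1 / (H x0 - U z) powr (3/2))"
    unfolding I_def psi_def h0_def by (rule integral_mult_right)
  then have "Dv = - E x0 p" unfolding Dv_def E_def ph Hd_def by (simp add: algebra_simps)
  then show ?thesis using dS S_def by simp
qed

lemma deriv_nonpos:
  fixes f :: "real \<Rightarrow> real"
  assumes m: "0 < m" and x: "x \<in> {0..m}"
    and dec: "\<And>a b. a \<in> {0..m} \<Longrightarrow> b \<in> {0..m} \<Longrightarrow> a < b \<Longrightarrow> f b < f a"
    and d: "(f has_real_derivative D) (at x within {0..m})"
  shows "D \<le> 0"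
proof -
  have lim: "((\<lambda>z. (f z - f x) / (z - x)) \<longlongrightarrow> D) (at x within {0..m})"
    using d by (simp add: has_field_derivative_iff)
  have ev: "eventually (\<lambda>z. (f z - f x) / (z - x) \<le> 0) (at x within {0..m})"
    unfolding eventually_at_filter
  proof (rule always_eventually, intro allI impI)
    fix z assume z: "z \<noteq> x" "z \<in> {0..m}"
    show "(f z - f x) / (z - x) \<le> 0"
    proof (cases "z < x")
      case True
      then show ?thesis using dec[of z x] z x by (auto simp: divide_le_0_iff)
    next
      case False
      then have "x < z" using z by simp
      then show ?thesis using dec[of x z] z x by (auto simp: divide_le_0_iff)
    qed
  qed
  have "at x within {0..m} \<noteq> bot" using m x by (simp add: trivial_limit_within islimpt_Icc)
  then show ?thesis using tendsto_upperbound[OF lim ev] by simp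
qed

lemma E_pos:
  assumes all: "\<forall>p>0. \<forall>x\<in>{0..min p 1}. E x p \<ge> 0" and p: "p > 0" and x: "x \<in> {0..min p 1}"
  shows "E x p > 0"
proof (rule ccontr)
  assume "\<not> E x p > 0"
  then have E0: "E x p = 0" using all p x by force
  have x1: "x \<in> {0..1}" "x \<le> p" using x by auto
  define f where "f = (\<lambda>z. 1 / (H x - U z) powr (3/2))"
  define J where "J q = integral {x..q} f" for q
  define C where "C = (v x * v' x - F x) / (2 * sqrt 2)"
  have Eq: "E x q = 1 / v x + C * J q" for q unfolding E_def J_def C_def f_def by simp
  have fpos: "f z > 0" if "x \<le> z" for z
    unfolding f_def using Hpos[OF x1(1) that] by simp
  have jc: "continuous_on {x..b} f" for b
  proof -
    have pos': "\<And>z. z \<in> {x..b} \<Longrightarrow> H x - U z > 0" using Hpos[OF x1(1)] by auto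
    show ?thesis unfolding f_def by (intro continuous_intros) (use pos' in force)+
  qed
  have fint: "f integrable_on {x..b}" for b by (rule integrable_continuous_real[OF jc])
  have Jnn: "J p \<ge> 0" unfolding J_def
    by (rule integral_nonneg[OF fint]) (use fpos in \<open>auto intro: less_imp_le\<close>)
  have vx: "v x > 0" using v_pos[OF x1(1)] .
  have CJ: "C * J p < 0" using E0 Eq[of p] vx by (simp add: add_eq_0_iff) 
  then have C: "C < 0" using Jnn by (meson mult_nonneg_nonneg not_less)
  have pos: "integral {p..p+1} f > 0"
  proof -
    have cp: "continuous_on {p..p+1} f" using jc[of "p+1"] by (rule continuous_on_subset) (use x1 in auto)
    obtain zm where zm: "zm \<in> {p..p+1}" "\<And>z. z \<in> {p..p+1} \<Longrightarrow> f zm \<le> f z"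
      using continuous_attains_inf[OF compact_Icc _ cp] by auto
    have fzm: "f zm > 0" using fpos zm(1) x1 by auto
    have "integral {p..p+1} (\<lambda>z. f zm) \<le> integral {p..p+1} f"
      by (rule integral_le) (use zm integrable_continuous_real[OF cp] in auto)
    then show ?thesis using fzm by simp
  qed
  have "J (p+1) = J p + integral {p..p+1} f"
    unfolding J_def using Henstock_Kurzweil_Integration.integral_combine[OF x1(2) _ fint, of "p+1"] by simp
  then have "E x (p+1) = E x p + C * integral {p..p+1} f" using Eq by (simp add: algebra_simps)
  then have "E x (p+1) < 0" using E0 C pos by (simp add: mult_neg_pos)
  moreover have "E x (p+1) \<ge> 0" using all p x by auto
  ultimately show False by simp
qed

lemma partB:
 "(\<forall>p>0. \<forall>x\<in>{0..min p 1}. \<forall>x'\<in>{0..min p 1}. x < x' \<longrightarrow> first_time y x' p < first_time y x p)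
  \<longleftrightarrow> (\<forall>p>0. (\<forall>x\<in>{0..min p 1}. E x p \<ge> 0) \<and> discrete {x\<in>{0..min p 1}. E x p = 0})"
proof
  assume st: "\<forall>p>0. \<forall>x\<in>{0..min p 1}. \<forall>x'\<in>{0..min p 1}. x < x' \<longrightarrow> first_time y x' p < first_time y x p"
  have nn: "\<forall>p>0. \<forall>x\<in>{0..min p 1}. E x p \<ge> 0"
  proof (intro allI impI ballI)
    fix p x :: real assume p: "p > 0" and x: "x \<in> {0..min p 1}"
    have m: "0 < min p 1" using p by simp
    have "- E x p \<le> 0"
    proof (rule deriv_nonpos[OF m x _ tau_deriv[OF p x]])
      fix a b assume a: "a \<in> {0..min p 1}" and b: "b \<in> {0..min p 1}" and ab: "a < b"
      have "first_time y b p < first_time y a p" using st p a b ab by blast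
      then show "tau b p < tau a p" using first_time_eq[of a p] first_time_eq[of b p] a b by auto
    qed
    then show "E x p \<ge> 0" by simp
  qed
  show "\<forall>p>0. (\<forall>x\<in>{0..min p 1}. E x p \<ge> 0) \<and> discrete {x\<in>{0..min p 1}. E x p = 0}"
  proof (intro allI impI conjI)
    fix p :: real assume p: "p > 0"
    show "\<forall>x\<in>{0..min p 1}. E x p \<ge> 0" using nn p by blast
    have eq: "{x\<in>{0..min p 1}. E x p = 0} = {}" using E_pos[OF nn p] by force
    show "discrete {x\<in>{0..min p 1}. E x p = 0}" unfolding eq by (simp add: discrete_def)
  qed
next
  assume h3: "\<forall>p>0. (\<forall>x\<in>{0..min p 1}. E x p \<ge> 0) \<and> discrete {x\<in>{0..min p 1}. E x p = 0}"
  then have nn: "\<forall>p>0. \<forall>x\<in>{0..min p 1}. E x p \<ge> 0" by blast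
  show "\<forall>p>0. \<forall>x\<in>{0..min p 1}. \<forall>x'\<in>{0..min p 1}. x < x' \<longrightarrow> first_time y x' p < first_time y x p"
  proof (intro allI impI ballI)
    fix p x x' :: real assume p: "p > 0" and x: "x \<in> {0..min p 1}" and x': "x' \<in> {0..min p 1}" and xx: "x < x'"
    have "- tau x p < - tau x' p"
    proof (rule inc_lemma[OF xx, of _ "\<lambda>s. E s p"])
      fix s assume s: "s \<in> {x..x'}"
      then have sS: "s \<in> {0..min p 1}" using x x' by auto
      have dd: "((\<lambda>s. tau s p) has_real_derivative - E s p) (at s within {x..x'})"
        by (rule has_field_derivative_subset[OF tau_deriv[OF p sS]]) (use x x' in auto)
      show "((\<lambda>s. - tau s p) has_real_derivative E s p) (at s within {x..x'})"
        using DERIV_minus[OF dd] by simp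
    next
      fix s assume "s \<in> {x<..<x'}"
      then have sS: "s \<in> {0..min p 1}" using x x' by auto
      show "E s p > 0" by (rule E_pos[OF nn p sS])
    qed
    then show "first_time y x' p < first_time y x p" using first_time_eq[of x p] first_time_eq[of x' p] x x' by auto
  qed
qed

end

theorem theorem1:
  fixes F v v' :: "real \<Rightarrow> real"
    and y y' :: "real \<Rightarrow> real \<Rightarrow> real"
  assumes F_smooth: "smooth_on UNIV F"
    and v_smooth: "smooth_on {0..1} v"
    and v'_deriv: "\<And>x. x \<in> {0..1} \<Longrightarrow> (v has_real_derivative v' x) (at x within {0..1})"
    and y_init: "\<And>x. x \<in> {0..1} \<Longrightarrow> y 0 x = x"
    and y'_init: "\<And>x. x \<in> {0..1} \<Longrightarrow> y' 0 x = v x"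
    and y_deriv: "\<And>x t. x \<in> {0..1} \<Longrightarrow> 0 \<le> t \<Longrightarrow>
        ((\<lambda>s. y s x) has_real_derivative y' t x) (at t within {0..})"
    and y'_deriv: "\<And>x t. x \<in> {0..1} \<Longrightarrow> 0 \<le> t \<Longrightarrow>
        ((\<lambda>s. y' s x) has_real_derivative F (y t x)) (at t within {0..})"
    and v_pos: "\<And>x. x \<in> {0..1} \<Longrightarrow> v x > 0"
    and energy_pos: "\<And>x p. x \<in> {0..1} \<Longrightarrow> x \<le> p \<Longrightarrow> energy0 F v x - potU F p > 0"
  shows
   "((\<forall>t\<ge>0. \<forall>x\<in>{0..1}. \<forall>x'\<in>{0..1}. x \<noteq> x' \<longrightarrow> y t x \<noteq> y t x')
     \<longleftrightarrow>
     (\<forall>p>0. \<forall>x\<in>{0..min p 1}. \<forall>x'\<in>{0..min p 1}. x < x' \<longrightarrow>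
          first_time y x' p < first_time y x p))
   \<and>
    ((\<forall>p>0. \<forall>x\<in>{0..min p 1}. \<forall>x'\<in>{0..min p 1}. x < x' \<longrightarrow>
          first_time y x' p < first_time y x p)
     \<longleftrightarrow>
     (\<forall>p>0.
        (\<forall>x\<in>{0..min p 1}.
           1 / v x + (v x * v' x - F x) / (2 * sqrt 2) *
             integral {x..p} (\<lambda>z. 1 / (energy0 F v x - potU F z) powr (3/2)) \<ge> 0)
      \<and> discrete {x\<in>{0..min p 1}.
           1 / v x + (v x * v' x - F x) / (2 * sqrt 2) *
             integral {x..p} (\<lambda>z. 1 / (energy0 F v x - potU F z) powr (3/2)) = 0}))"
proof -
  interpret L: traj F v v' y y'
    by (unfold_locales; fact assms)
  show ?thesis using L.partA L.partB unfolding L.E_def by blast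
qed

end
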